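(* Let $\kappa\in(1,2)$ and $\delta\in(0,1]$. There exist a function $\Phi$ on $\bar C_1$, continuous on $\bar C_1$ and having locally continuous derivatives $\partial_t\Phi$, $D\Phi$, $D^2\Phi$ in $C_1$, and a constant $N=N(\kappa,\delta)$ such that $$\partial_t\Phi+a^{ij}D_{ij}\Phi\le-\big[(1-|x|)\wedge\sqrt{1-t}\big]^{\kappa-2}$$ in $C_1$ for every $(a^{ij})\in\mathbb{S}_\delta$, and $0\le\Phi(t,x)\le N(1-|x|)$ in $C_1$.
   Context: $B_1$ is the open unit ball in $\mathbb{R}^d$, $C_1=[0,1)\times B_1$. $\mathbb{S}$ is the set of symmetric $d\times d$ real matrices and $\mathbb{S}_\delta=\{a\in\mathbb{S}:\delta|\lambda|^2\le a^{ij}\lambda^i\lambda^j\le\delta^{-1}|\lambda|^2\ \forall\lambda\}$; summation over repeated indices; $D_{ij}$ are second derivatives in $x$. *)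

theory Defs
  imports "HOL-Analysis.Analysis"
begin

text \<open>The space R^d is real^'n for a finite index type 'n (d = CARD('n)).
  Points of the cylinder are pairs (t, x).\<close>

definition C1 :: "(real \<times> (real^'n)) set" where
  "C1 = {(t, x). 0 \<le> t \<and> t < 1 \<and> norm x < 1}"

definition C1bar :: "(real \<times> (real^'n)) set" where
  "C1bar = {(t, x). 0 \<le> t \<and> t \<le> 1 \<and> norm x \<le> 1}"

definition Sdelta :: "real \<Rightarrow> (real^'n^'n) set" where
  "Sdelta \<delta> = {a. transpose a = a \<and>
     (\<forall>v::real^'n. \<delta> * (norm v)\<^sup>2 \<le> v \<bullet> (a *v v) \<and>
                      v \<bullet> (a *v v) \<le> (1 / \<delta>) * (norm v)\<^sup>2)}"

text \<open>The time derivative is taken within [0,1) (one-sided at t = 0, as C1 contains t = 0).\<close>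
definition C12_derivs ::
  "(real \<Rightarrow> real^'n \<Rightarrow> real) \<Rightarrow> (real \<Rightarrow> real^'n \<Rightarrow> real) \<Rightarrow>
   (real \<Rightarrow> real^'n \<Rightarrow> real^'n) \<Rightarrow> (real \<Rightarrow> real^'n \<Rightarrow> real^'n^'n) \<Rightarrow> bool" where
  "C12_derivs \<Phi> \<Phi>t D\<Phi> D2\<Phi> \<longleftrightarrow>
     (\<forall>(t, x)\<in>C1. ((\<lambda>s. \<Phi> s x) has_real_derivative \<Phi>t t x) (at t within {0..<1})) \<and>
     (\<forall>(t, x)\<in>C1. ((\<lambda>y. \<Phi> t y) has_derivative (\<lambda>h. D\<Phi> t x \<bullet> h)) (at x)) \<and>
     (\<forall>(t, x)\<in>C1. ((\<lambda>y. D\<Phi> t y) has_derivative (\<lambda>h. D2\<Phi> t x *v h)) (at x)) \<and>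
     continuous_on C1 (\<lambda>(t, x). \<Phi>t t x) \<and>
     continuous_on C1 (\<lambda>(t, x). D\<Phi> t x) \<and>
     continuous_on C1 (\<lambda>(t, x). D2\<Phi> t x)"

end

theory Submission
  imports Defs
begin


definition FF :: "real \<Rightarrow> real \<Rightarrow> real \<Rightarrow> real \<Rightarrow> real" where
  "FF k A w s = 2*A*w + s powr (k/2) - (w\<^sup>2+s) powr (k/2) - w powr k"
definition Fw :: "real \<Rightarrow> real \<Rightarrow> real \<Rightarrow> real \<Rightarrow> real" where
  "Fw k A w s = 2*A - k*w*(w\<^sup>2+s) powr (k/2-1) - k * w powr (k-1)"
definition Fww :: "real \<Rightarrow> real \<Rightarrow> real \<Rightarrow> real" where
  "Fww k w s = - k*(w\<^sup>2+s) powr (k/2-2) * ((k-1)*w\<^sup>2+s) - k*(k-1)*w powr (k-2)"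
definition Ft :: "real \<Rightarrow> real \<Rightarrow> real \<Rightarrow> real" where
  "Ft k w s = (k/2)*((w\<^sup>2+s) powr (k/2-1) - s powr (k/2-1))"

lemma d_FF: assumes "0 < w" "0 \<le> s"
  shows "((\<lambda>w. FF k A w s) has_real_derivative Fw k A w s) (at w)"
proof -
  have P: "0 < w\<^sup>2 + s" using assms by (simp add: add_pos_nonneg)
  have "((\<lambda>w. FF k A w s) has_real_derivative
      2*A + 0 - (k/2) * (w\<^sup>2+s) powr (k/2 - 1) * (2*w) - k * w powr (k-1)) (at w)"
    unfolding FF_def
    apply (intro derivative_eq_intros DERIV_fun_powr[where r="k/2", simplified] refl)
    using P assms by (auto intro!: derivative_eq_intros)
  then show ?thesis unfolding Fw_def by (simp add: algebra_simps)
qed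

lemma d_Fw: assumes "0 < w" "0 \<le> s"
  shows "((\<lambda>w. Fw k A w s) has_real_derivative Fww k w s) (at w)"
proof -
  have P: "0 < w\<^sup>2 + s" using assms by (simp add: add_pos_nonneg)
  have "((\<lambda>w. Fw k A w s) has_real_derivative
      0 - (k * 1 * (w\<^sup>2+s) powr (k/2-1) + k*w*((k/2-1) * (w\<^sup>2+s) powr (k/2 - 1 - 1) * (2*w)))
        - k * ((k-1) * w powr (k-1-1))) (at w)"
    unfolding Fw_def
    using P assms apply (auto intro!: derivative_eq_intros)
    done
  moreover have "(w\<^sup>2+s) powr (k/2-1) = (w\<^sup>2+s) powr (k/2-2) * (w\<^sup>2+s)"
  proof -
    have "(w\<^sup>2+s) powr (k/2-1) = (w\<^sup>2+s) powr (k/2-2+1)" by simp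
    also have "\<dots> = (w\<^sup>2+s) powr (k/2-2) * (w\<^sup>2+s) powr 1" by (rule powr_add)
    finally show ?thesis using P by simp
  qed
  ultimately show ?thesis unfolding Fww_def
    by (simp add: algebra_simps power2_eq_square)
qed

lemma d_Ft: assumes "0 < w" "0 < s"
  shows "((\<lambda>t. FF k A w (1 - t)) has_real_derivative Ft k w s) (at (1 - s))"
proof -
  have P: "0 < w\<^sup>2 + s" using assms by (simp add: add_pos_nonneg)
  have "((\<lambda>t. FF k A w (1 - t)) has_real_derivative
      0 + (k/2) * (1 - (1-s)) powr (k/2-1) * (0 - 1) - (k/2) * (w\<^sup>2 + (1 - (1-s))) powr (k/2-1) * (0 + (0 - 1)) - 0) (at (1 - s))"
    unfolding FF_def
    using P assms apply (auto intro!: derivative_eq_intros)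
    done
  then show ?thesis unfolding Ft_def by (simp add: algebra_simps)
qed



lemma sq_powr: "0 < (w::real) \<Longrightarrow> (w\<^sup>2) powr (a::real) = w powr (2*a)"
  using powr_powr[of w 2 a] by simp

lemma Fw_ge: assumes k: "1 < k" "k < 2" and w: "0 < w" "w \<le> 1" and s: "0 \<le> s"
  shows "Fw k (k+1) w s \<ge> 2"
proof -
  have a: "w powr (k-1) \<le> 1" using w k powr_mono2[of "k-1" w 1] by simp
  have "(w\<^sup>2+s) powr (k/2-1) \<le> (w\<^sup>2) powr (k/2-1)"
    using k w s by (intro powr_mono2') auto
  also have "\<dots> = w powr (k-2)" using w by (simp add: sq_powr algebra_simps)
  finally have "w * (w\<^sup>2+s) powr (k/2-1) \<le> w * w powr (k-2)" using w by simp
  also have "\<dots> = w powr (k-1)" using w powr_mult_base[of w "k-2"] by simp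
  finally have b: "w * (w\<^sup>2+s) powr (k/2-1) \<le> 1" using a by simp
  have "k * (w * (w\<^sup>2+s) powr (k/2-1)) \<le> k" using b k by (simp add: mult_left_le)
  moreover have "k * w powr (k-1) \<le> k" using a k by (simp add: mult_left_le)
  ultimately show ?thesis unfolding Fw_def by (simp add: algebra_simps)
qed

lemma Ft_le: assumes k: "1 < k" "k < 2" and s: "0 < s"
  shows "Ft k w s \<le> 0"
proof -
  have "(w\<^sup>2+s) powr (k/2-1) \<le> s powr (k/2-1)"
    using k s by (intro powr_mono2') auto
  then show ?thesis unfolding Ft_def using k by (simp add: mult_nonneg_nonpos)
qed



lemma main_ineq:
  assumes k: "1 < k" "k < 2" and d: "0 < \<delta>" "\<delta> \<le> 1"
    and r: "0 \<le> r2" "r2 < 1" and w: "w = 1 - r2" and s: "0 < s" "s \<le> 1"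
    and T: "T \<ge> \<delta>" and X: "X \<ge> \<delta> * r2"
  defines "c1 \<equiv> min \<delta> (2*\<delta>*k*(k-1))"
  defines "c2 \<equiv> min (min ((k/2)*(1 - 2 powr (k/2-1))) (2*\<delta>*k*2 powr (k/2-2))) \<delta>"
  shows "Ft k w s + (-2*Fw k (k+1) w s)*T + 4*Fww k w s * X
     \<le> - c1 * w powr (k-2) - c2 * s powr (k/2-1)"
proof -
  define P where "P = w\<^sup>2 + s"
  define Q where "Q = (k-1)*w\<^sup>2 + s"
  define Wt where "Wt = w powr (k-2)"
  define St where "St = s powr (k/2-1)"
  define PQ where "PQ = P powr (k/2-2) * Q"
  have w0: "0 < w" "w \<le> 1" using r w by auto
  have P0: "s \<le> P" "0 < P" using s by (auto simp: P_def add_nonneg_pos)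
  have Q0: "s \<le> Q" using k by (simp add: Q_def)
  have Wt0: "0 \<le> Wt" "0 \<le> St" by (auto simp: Wt_def St_def)
  have PQ0: "0 \<le> PQ" using P0 Q0 s by (simp add: PQ_def)
  have Fw2: "Fw k (k+1) w s \<ge> 2" using Fw_ge k w0 s by auto
  have Fww_eq: "Fww k w s = - k * PQ - k*(k-1)*Wt" by (simp add: Fww_def PQ_def P_def Q_def Wt_def)
  have Fww0: "Fww k w s \<le> 0"
  proof -
    have "0 \<le> k*PQ" "0 \<le> k*(k-1)*Wt" using k PQ0 Wt0 by auto
    then show ?thesis using Fww_eq by linarith
  qed
  have Ft0: "Ft k w s \<le> 0" using Ft_le k s by auto
  have e1: "(-2*Fw k (k+1) w s)*T \<le> -4*\<delta>"
  proof -
    have "2*\<delta> \<le> Fw k (k+1) w s * T" using Fw2 T d by (metis mult_mono' mult.commute order_less_imp_le zero_le_numeral)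
    then show ?thesis by (simp add: mult.commute)
  qed
  have e2: "4*Fww k w s * X \<le> 4*Fww k w s * (\<delta> * r2)"
    using Fww0 X by (simp add: mult_left_mono_neg)
  have E: "Ft k w s + (-2*Fw k (k+1) w s)*T + 4*Fww k w s * X
     \<le> (-2*\<delta> - 4*\<delta>*r2*k*(k-1)*Wt) + (Ft k w s - 2*\<delta> - 4*\<delta>*r2*k*PQ)"
  proof -
    have "4*Fww k w s * (\<delta> * r2) = -4*\<delta>*r2*k*PQ - 4*\<delta>*r2*k*(k-1)*Wt"
      by (simp add: Fww_eq algebra_simps)
    then show ?thesis using e1 e2 by linarith
  qed
  have part1: "-2*\<delta> - 4*\<delta>*r2*k*(k-1)*Wt \<le> - c1 * Wt"
  proof (cases "r2 \<ge> 1/2")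
    case True
    have "c1 * Wt \<le> (2*\<delta>*k*(k-1)) * Wt" using Wt0 by (intro mult_right_mono) (auto simp: c1_def)
    also have "\<dots> \<le> 4*\<delta>*r2*k*(k-1)*Wt"
    proof -
      have "0 \<le> \<delta>*k*(k-1)*Wt" using d k Wt0 by simp
      then have "(1/2) * (\<delta>*k*(k-1)*Wt) \<le> r2 * (\<delta>*k*(k-1)*Wt)" using True by (intro mult_right_mono) auto
      then show ?thesis by (simp add: algebra_simps)
    qed
    finally show ?thesis using d by simp
  next
    case False
    then have "1/2 \<le> w" using w by simp
    then have "Wt \<le> (1/2) powr (k-2)" unfolding Wt_def using k by (intro powr_mono2') auto
    also have "(1/2::real) powr (k-2) = 2 powr (2-k)" by (simp add: powr_divide powr_minus_divide[symmetric] powr_minus)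
    also have "\<dots> \<le> 2 powr 1" using k by (intro powr_mono) auto
    finally have "Wt \<le> 2" by simp
    have "c1 * Wt \<le> \<delta> * Wt" using Wt0 by (intro mult_right_mono) (auto simp: c1_def)
    also have "\<dots> \<le> 2*\<delta>" using \<open>Wt \<le> 2\<close> d by simp
    moreover have "0 \<le> 4*\<delta>*r2*k*(k-1)*Wt" using d k r Wt0 by simp
    ultimately show ?thesis by linarith
  qed
  have part2: "Ft k w s - 2*\<delta> - 4*\<delta>*r2*k*PQ \<le> - c2 * St"
  proof -
    have nn: "0 \<le> 4*\<delta>*r2*k*PQ" using d r k PQ0 by simp
    consider "s \<le> w\<^sup>2" | "w\<^sup>2 < s" "r2 \<ge> 1/2" | "w\<^sup>2 < s" "r2 < 1/2" by linarith
    then show ?thesis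
    proof cases
      case 1
      have "2 * s \<le> P" using 1 by (simp add: P_def)
      then have "P powr (k/2-1) \<le> (2 * s) powr (k/2-1)" using k s by (intro powr_mono2') auto
      also have "\<dots> = 2 powr (k/2-1) * St" by (simp add: St_def powr_mult)
      finally have "Ft k w s \<le> (k/2)*(2 powr (k/2-1) * St - St)"
        unfolding Ft_def using k by (simp add: P_def St_def)
      also have "\<dots> = - ((k/2)*(1 - 2 powr (k/2-1))) * St" by (simp add: algebra_simps)
      also have "\<dots> \<le> - c2 * St" using Wt0 by (intro mult_right_mono) (auto simp: c2_def)
      finally show ?thesis using nn d by linarith
    next
      case 2
      have "P \<le> 2 * s" using 2 by (simp add: P_def)
      then have "(2 * s) powr (k/2-2) \<le> P powr (k/2-2)" using k s P0 by (intro powr_mono2') auto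
      then have "(2 * s) powr (k/2-2) * s \<le> PQ" unfolding PQ_def using Q0 s P0
        by (intro mult_mono) auto
      moreover have "(2 * s) powr (k/2-2) * s = 2 powr (k/2-2) * St"
      proof -
        have "s powr (k/2-2) * s = s powr (k/2-2) * s powr 1" using s by simp
        also have "\<dots> = s powr (k/2-2+1)" by (rule powr_add[symmetric])
        also have "\<dots> = St" unfolding St_def by simp
        finally show ?thesis by (simp add: powr_mult)
      qed
      ultimately have pq: "2 powr (k/2-2) * St \<le> PQ" by simp
      have "c2 * St \<le> (2*\<delta>*k*2 powr (k/2-2)) * St" using Wt0 by (intro mult_right_mono) (auto simp: c2_def)
      also have "\<dots> = (2*\<delta>*k) * (2 powr (k/2-2) * St)" by simp
      also have "\<dots> \<le> (2*\<delta>*k) * PQ" using pq d k by (intro mult_left_mono) auto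
      also have "\<dots> \<le> 4*\<delta>*r2*k*PQ"
      proof -
        have "0 \<le> \<delta>*k*PQ" using d k PQ0 by simp
        then have "(1/2) * (\<delta>*k*PQ) \<le> r2 * (\<delta>*k*PQ)" using 2 by (intro mult_right_mono) auto
        then show ?thesis by (simp add: algebra_simps)
      qed
      finally show ?thesis using Ft0 d by linarith
    next
      case 3
      then have "1/2 < w" using w by simp
      then have "(1/2::real)\<^sup>2 < w\<^sup>2" by (intro power_strict_mono) auto
      then have "1/4 < s" using 3 by (simp add: power2_eq_square)
      then have "St \<le> (1/4) powr (k/2-1)" unfolding St_def using k by (intro powr_mono2') auto
      also have "(1/4::real) powr (k/2-1) = 4 powr (1-k/2)" by (simp add: powr_divide powr_minus_divide[symmetric] powr_minus)
      also have "\<dots> \<le> 4 powr (1/2)" using k by (intro powr_mono) auto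
      also have "(4::real) powr (1/2) = 2" by (simp add: powr_half_sqrt)
      finally have "St \<le> 2" .
      have "c2 * St \<le> \<delta> * St" using Wt0 by (intro mult_right_mono) (auto simp: c2_def)
      also have "\<dots> \<le> 2*\<delta>" using \<open>St \<le> 2\<close> d by simp
      finally show ?thesis using nn Ft0 by linarith
    qed
  qed
  show ?thesis using E part1 part2 by (simp add: Wt_def St_def)
qed



lemma powr_subadd:
  fixes a b p :: real
  assumes "0 \<le> a" "0 \<le> b" "0 < p" "p \<le> 1"
  shows "(a+b) powr p \<le> a powr p + b powr p"
proof (cases "a + b = 0")
  case True then show ?thesis using assms by simp
next
  case False
  then have ab: "0 < a + b" using assms by simp
  have key: "(a+b) powr p * (c/(a+b)) \<le> c powr p" if c: "0 \<le> c" "c \<le> a+b" for c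
  proof -
    have t: "0 \<le> c/(a+b)" "c/(a+b) \<le> 1" using c ab by auto
    have "c/(a+b) = (c/(a+b)) powr 1" using t c ab by simp
    also have "\<dots> \<le> (c/(a+b)) powr p" using t assms by (intro powr_mono') auto
    finally have "(a+b) powr p * (c/(a+b)) \<le> (a+b) powr p * (c/(a+b)) powr p"
      by (intro mult_left_mono) auto
    also have "\<dots> = c powr p" using ab by (simp add: powr_divide)
    finally show ?thesis .
  qed
  have e: "(a+b) powr p * (a/(a+b)) + (a+b) powr p * (b/(a+b)) = (a+b) powr p * ((a+b)/(a+b))"
    by (simp only: add_divide_distrib distrib_left)
  have "(a+b) powr p = (a+b) powr p * (a/(a+b)) + (a+b) powr p * (b/(a+b))"
    using ab e by simp
  also have "\<dots> \<le> a powr p + b powr p"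
    using key[of a] key[of b] assms by (intro add_mono) auto
  finally show ?thesis .
qed



lemma FF_bounds:
  assumes k: "1 < k" "k < 2" and w: "0 < w" "w \<le> 1" and s: "0 \<le> s"
  shows "0 \<le> FF k (k+1) w s" "FF k (k+1) w s \<le> 2*(k+1)*w"
proof -
  have f1: "(w\<^sup>2+s) powr (k/2) \<le> (w\<^sup>2) powr (k/2) + s powr (k/2)"
    using k s by (intro powr_subadd) auto
  have f2: "(w\<^sup>2) powr (k/2) = w powr k" using w sq_powr[of w "k/2"] by simp
  have "w powr k \<le> w powr 1" using w k by (intro powr_mono') auto
  then have f3: "w powr k \<le> w" using w by simp
  have f4: "s powr (k/2) \<le> (w\<^sup>2+s) powr (k/2)" using s k by (intro powr_mono2) auto
  have f5: "2*w \<le> 2*(k+1)*w" using w k by simp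
  have f6: "0 \<le> 2*(k+1)*w" using w k by simp
  show "0 \<le> FF k (k+1) w s" unfolding FF_def using f1 f2 f3 f4 f5 by linarith
  show "FF k (k+1) w s \<le> 2*(k+1)*w" unfolding FF_def using f1 f2 f3 f4 f6 by linarith
qed



lemma min_bound:
  fixes r s k :: real
  assumes k: "1 < k" "k < 2" and r: "0 \<le> r" "r < 1" and s: "0 < s"
  shows "(min (1 - r) (sqrt s)) powr (k-2) \<le> 2 * ((1 - r\<^sup>2) powr (k-2) + s powr (k/2-1))"
proof (cases "1 - r \<le> sqrt s")
  case True
  have rr: "r*r \<le> r" using r mult_right_mono[of r 1 r] by simp
  have sq: "(1-r)*(1-r) = 1 - 2*r + r*r" by (simp add: algebra_simps)
  have "0 \<le> (1-r)*(1-r)" by simp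
  moreover have "r\<^sup>2 = r*r" by (simp add: power2_eq_square)
  moreover have e1: "1 - r\<^sup>2 = (1-r)*(1+r)" by (simp add: algebra_simps power2_eq_square)
  moreover have e2: "(1-r)*(1+r) \<le> (1-r)*2" using r by (intro mult_left_mono) auto
  ultimately have w0: "0 < 1 - r\<^sup>2" using r rr sq by linarith
  have "1 - r\<^sup>2 \<le> 2*(1-r)" using e1 e2 by (simp add: mult.commute)
  then have w: "0 < 1 - r\<^sup>2" "(1 - r\<^sup>2)/2 \<le> 1 - r" using w0 by simp_all
  have "(1 - r) powr (k-2) \<le> ((1 - r\<^sup>2)/2) powr (k-2)" using w k by (intro powr_mono2') auto
  also have "\<dots> = (1 - r\<^sup>2) powr (k-2) / 2 powr (k-2)" by (rule powr_divide)
  also have "\<dots> = (1 - r\<^sup>2) powr (k-2) * 2 powr (2-k)"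
  proof -
    have "(2::real) powr (2-k) * 2 powr (k-2) = 2 powr ((2-k) + (k-2))" by (rule powr_add[symmetric])
    then have "(2::real) powr (2-k) * 2 powr (k-2) = 1" by simp
    then show ?thesis by (simp add: field_simps)
  qed
  also have "\<dots> \<le> (1 - r\<^sup>2) powr (k-2) * 2"
  proof -
    have "(2::real) powr (2-k) \<le> 2 powr 1" using k by (intro powr_mono) auto
    then show ?thesis by (intro mult_left_mono) auto
  qed
  finally have h1: "(1 - r) powr (k-2) \<le> (1 - r\<^sup>2) powr (k-2) * 2" .
  have h2: "(1 - r\<^sup>2) powr (k-2) * 2 \<le> 2 * ((1 - r\<^sup>2) powr (k-2) + s powr (k/2-1))" by simp
  have m: "min (1 - r) (sqrt s) = 1 - r" using True by simp
  show ?thesis unfolding m using h1 h2 by (rule order_trans)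
next
  case False
  have "sqrt s powr (k-2) = (s powr (1/2)) powr (k-2)" using s by (simp add: powr_half_sqrt)
  also have "\<dots> = s powr (1/2*(k-2))" by (rule powr_powr)
  also have "1/2*(k-2) = k/2-1" by simp
  finally have "sqrt s powr (k-2) = s powr (k/2-1)" .
  then show ?thesis using False by (simp add: algebra_simps)
qed



lemma dw: "((\<lambda>y. 1 - y \<bullet> y) has_derivative (\<lambda>h. -2 * (x \<bullet> h))) (at (x::real^'n))"
  by (auto intro!: derivative_eq_intros simp: fun_eq_iff inner_commute)

lemma dx1:
  fixes x :: "real^'n"
  assumes "x \<bullet> x < 1" "0 \<le> s"
  shows "((\<lambda>y. K * FF k A (1 - y \<bullet> y) s) has_derivative
           (\<lambda>h. ((K * (-2) * Fw k A (1 - x \<bullet> x) s) *\<^sub>R x) \<bullet> h)) (at x)"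
proof -
  have "((\<lambda>y. FF k A (1 - y \<bullet> y) s) has_derivative (\<lambda>h. -2 * (x \<bullet> h) * Fw k A (1 - x \<bullet> x) s)) (at x)"
    using DERIV_compose_FDERIV[OF d_FF dw] assms by simp
  then have "((\<lambda>y. K * FF k A (1 - y \<bullet> y) s) has_derivative (\<lambda>h. K * (-2 * (x \<bullet> h) * Fw k A (1 - x \<bullet> x) s))) (at x)"
    by (rule has_derivative_mult_right)
  then show ?thesis by (rule has_derivative_eq_rhs) (auto simp: fun_eq_iff algebra_simps)
qed

definition Hmat :: "real \<Rightarrow> real \<Rightarrow> real^'n \<Rightarrow> real^'n^'n" where
  "Hmat a b x = (\<chi> i j. a * (if i = j then 1 else 0) + b * (x $ i) * (x $ j))"

lemma Hmat_mult: "Hmat a b x *v h = a *\<^sub>R h + (b * (x \<bullet> h)) *\<^sub>R x"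
proof -
  have "(Hmat a b x *v h) $ i = (a *\<^sub>R h + (b * (x \<bullet> h)) *\<^sub>R x) $ i" for i
  proof -
    have "(Hmat a b x *v h) $ i = (\<Sum>j\<in>UNIV. (a * (if i = j then 1 else 0) + b * (x $ i) * (x $ j)) * h $ j)"
      by (simp add: Hmat_def matrix_vector_mult_def)
    also have "\<dots> = (\<Sum>j\<in>UNIV. (if i = j then a * h $ j else 0)) + (\<Sum>j\<in>UNIV. b * x $ i * (x $ j * h $ j))"
    proof -
      have "\<And>j. (a * (if i = j then 1 else 0) + b * (x $ i) * (x $ j)) * h $ j
          = (if i = j then a * h $ j else 0) + b * x $ i * (x $ j * h $ j)"
        by (simp add: algebra_simps)
      then show ?thesis by (simp only: sum.distrib[symmetric])
    qed
    also have "\<dots> = a * h $ i + b * x $ i * (x \<bullet> h)"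
      by (simp add: sum_distrib_left[symmetric] inner_vec_def)
    finally show ?thesis by simp
  qed
  then show ?thesis by (simp add: vec_eq_iff)
qed

lemma dx2:
  fixes x :: "real^'n"
  assumes "x \<bullet> x < 1" "0 \<le> s"
  shows "((\<lambda>y. (K * (-2) * Fw k A (1 - y \<bullet> y) s) *\<^sub>R y) has_derivative
           (\<lambda>h. Hmat (K * (-2) * Fw k A (1 - x \<bullet> x) s) (K * 4 * Fww k (1 - x \<bullet> x) s) x *v h)) (at x)"
proof -
  have "((\<lambda>y. Fw k A (1 - y \<bullet> y) s) has_derivative (\<lambda>h. -2 * (x \<bullet> h) * Fww k (1 - x \<bullet> x) s)) (at x)"
    using DERIV_compose_FDERIV[OF d_Fw dw] assms by simp
  then have "((\<lambda>y. (K * (-2)) * Fw k A (1 - y \<bullet> y) s) has_derivative (\<lambda>h. (K * (-2)) * (-2 * (x \<bullet> h) * Fww k (1 - x \<bullet> x) s))) (at x)"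
    by (rule has_derivative_mult_right)
  from has_derivative_scaleR[OF this has_derivative_ident]
  show ?thesis
    by (rule has_derivative_eq_rhs) (auto simp: fun_eq_iff Hmat_mult algebra_simps)
qed



lemma Sdelta_trace:
  fixes a :: "real^'n^'n"
  assumes "a \<in> Sdelta \<delta>" "0 < \<delta>"
  shows "\<delta> \<le> (\<Sum>i\<in>UNIV. a $ i $ i)"
proof -
  have "\<delta> \<le> a $ i $ i" for i
  proof -
    have "\<delta> * (norm (axis i (1::real)))\<^sup>2 \<le> axis i 1 \<bullet> (a *v axis i 1)"
      using assms unfolding Sdelta_def by blast
    moreover have "axis i 1 \<bullet> (a *v axis i 1) = a $ i $ i"
      by (simp add: inner_axis' matrix_vector_mult_basis column_def)
    ultimately show ?thesis by simp
  qed
  then have "(\<Sum>i\<in>(UNIV::'n set). \<delta>) \<le> (\<Sum>i\<in>UNIV. a $ i $ i)" by (intro sum_mono) auto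
  moreover have "\<delta> \<le> (\<Sum>i\<in>(UNIV::'n set). \<delta>)"
    using assms by (simp add: Suc_le_eq)
  ultimately show ?thesis by linarith
qed

lemma quad_eq:
  fixes a :: "real^'n^'n"
  shows "x \<bullet> (a *v x) = (\<Sum>i\<in>UNIV. \<Sum>j\<in>UNIV. a $ i $ j * (x $ i * x $ j))"
  by (simp add: inner_vec_def matrix_vector_mult_def sum_distrib_left algebra_simps)

lemma Sdelta_quad:
  fixes a :: "real^'n^'n"
  assumes "a \<in> Sdelta \<delta>"
  shows "\<delta> * (x \<bullet> x) \<le> (\<Sum>i\<in>UNIV. \<Sum>j\<in>UNIV. a $ i $ j * (x $ i * x $ j))"
  using assms unfolding Sdelta_def quad_eq[symmetric] by (auto simp: power2_norm_eq_inner)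

lemma op_Hmat:
  fixes a :: "real^'n^'n"
  shows "(\<Sum>i\<in>UNIV. \<Sum>j\<in>UNIV. a $ i $ j * Hmat \<alpha> \<beta> x $ i $ j)
     = \<alpha> * (\<Sum>i\<in>UNIV. a $ i $ i) + \<beta> * (\<Sum>i\<in>UNIV. \<Sum>j\<in>UNIV. a $ i $ j * (x $ i * x $ j))"
proof -
  have "\<And>i j. a $ i $ j * Hmat \<alpha> \<beta> x $ i $ j = (if i = j then \<alpha> * a $ i $ j else 0) + \<beta> * (a $ i $ j * (x $ i * x $ j))"
    by (simp add: Hmat_def algebra_simps)
  then show ?thesis
    by (simp add: sum.distrib sum_distrib_left)
qed



lemma cont_FF:
  assumes f: "continuous_on S f" and g: "continuous_on S g" and nn: "\<forall>p\<in>S. 0 \<le> f p \<and> 0 \<le> g p" and k: "0 < k"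
  shows "continuous_on S (\<lambda>p. K * FF k A (f p) (g p))"
proof -
  have p1: "continuous_on S (\<lambda>p. g p powr (k/2))"
    using continuous_on_powr'[of S g "\<lambda>_. k/2"] g nn k by force
  have fg: "continuous_on S (\<lambda>p. (f p)\<^sup>2 + g p)" by (intro continuous_on_add continuous_on_power f g)
  have p2: "continuous_on S (\<lambda>p. ((f p)\<^sup>2 + g p) powr (k/2))"
    using continuous_on_powr'[of S "\<lambda>p. (f p)\<^sup>2 + g p" "\<lambda>_. k/2"] fg nn k by force
  have p3: "continuous_on S (\<lambda>p. f p powr k)"
    using continuous_on_powr'[of S f "\<lambda>_. k"] f nn k by force
  have "continuous_on S (\<lambda>p. K * (2*A*f p + g p powr (k/2) - ((f p)\<^sup>2 + g p) powr (k/2) - f p powr k))"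
    by (intro continuous_on_mult continuous_on_add continuous_on_diff continuous_on_const f p1 p2 p3)
  then show ?thesis unfolding FF_def .
qed

lemma cont_pos_powr:
  fixes h :: "'a::topological_space \<Rightarrow> real"
  assumes h: "continuous_on S h" and pos: "\<forall>p\<in>S. 0 < h p"
  shows "continuous_on S (\<lambda>p. h p powr e)"
  using continuous_on_powr[of S h "\<lambda>_. e"] h pos by force

lemma cont_Ft:
  assumes f: "continuous_on S f" and g: "continuous_on S g" and pos: "\<forall>p\<in>S. 0 < f p \<and> 0 < g p"
  shows "continuous_on S (\<lambda>p. K * Ft k (f p) (g p))"
proof -
  have fg: "continuous_on S (\<lambda>p. (f p)\<^sup>2 + g p)" by (intro continuous_on_add continuous_on_power f g)
  have p1: "continuous_on S (\<lambda>p. ((f p)\<^sup>2 + g p) powr (k/2-1))"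
    by (rule cont_pos_powr[OF fg]) (use pos in \<open>auto simp: add_nonneg_pos\<close>)
  have p2: "continuous_on S (\<lambda>p. g p powr (k/2-1))"
    by (rule cont_pos_powr[OF g]) (use pos in auto)
  have "continuous_on S (\<lambda>p. K * ((k/2) * (((f p)\<^sup>2 + g p) powr (k/2-1) - g p powr (k/2-1))))"
    by (intro continuous_on_mult continuous_on_diff continuous_on_const p1 p2)
  then show ?thesis unfolding Ft_def .
qed

lemma cont_Fw:
  assumes f: "continuous_on S f" and g: "continuous_on S g" and pos: "\<forall>p\<in>S. 0 < f p \<and> 0 < g p"
  shows "continuous_on S (\<lambda>p. K * Fw k A (f p) (g p))"
proof -
  have fg: "continuous_on S (\<lambda>p. (f p)\<^sup>2 + g p)" by (intro continuous_on_add continuous_on_power f g)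
  have p1: "continuous_on S (\<lambda>p. ((f p)\<^sup>2 + g p) powr (k/2-1))"
    by (rule cont_pos_powr[OF fg]) (use pos in \<open>auto simp: add_nonneg_pos\<close>)
  have p2: "continuous_on S (\<lambda>p. f p powr (k-1))"
    by (rule cont_pos_powr[OF f]) (use pos in auto)
  have "continuous_on S (\<lambda>p. K * (2*A - k * f p * ((f p)\<^sup>2 + g p) powr (k/2-1) - k * f p powr (k-1)))"
    by (intro continuous_on_mult continuous_on_diff continuous_on_const p1 p2 f)
  then show ?thesis unfolding Fw_def .
qed

lemma cont_Fww:
  assumes f: "continuous_on S f" and g: "continuous_on S g" and pos: "\<forall>p\<in>S. 0 < f p \<and> 0 < g p"
  shows "continuous_on S (\<lambda>p. K * Fww k (f p) (g p))"
proof -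
  have fg: "continuous_on S (\<lambda>p. (f p)\<^sup>2 + g p)" by (intro continuous_on_add continuous_on_power f g)
  have p1: "continuous_on S (\<lambda>p. ((f p)\<^sup>2 + g p) powr (k/2-2))"
    by (rule cont_pos_powr[OF fg]) (use pos in \<open>auto simp: add_nonneg_pos\<close>)
  have p2: "continuous_on S (\<lambda>p. f p powr (k-2))"
    by (rule cont_pos_powr[OF f]) (use pos in auto)
  have "continuous_on S (\<lambda>p. K * (- k * ((f p)\<^sup>2 + g p) powr (k/2-2) * ((k-1) * (f p)\<^sup>2 + g p) - k * (k-1) * f p powr (k-2)))"
    by (intro continuous_on_mult continuous_on_diff continuous_on_add continuous_on_minus continuous_on_power continuous_on_const p1 p2 f g)
  then show ?thesis unfolding Fww_def .
qed



lemma inC1: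
  fixes x :: "real^'n"
  assumes "(t, x) \<in> C1"
  shows "0 \<le> t" "t < 1" "x \<bullet> x < 1" "0 \<le> x \<bullet> x" "norm x < 1" "x \<bullet> x = (norm x)\<^sup>2"
proof -
  have n: "0 \<le> t" "t < 1" "norm x < 1" using assms by (auto simp: C1_def)
  have e: "x \<bullet> x = (norm x)\<^sup>2" by (simp add: power2_norm_eq_inner)
  have "(norm x)\<^sup>2 < 1\<^sup>2" using n by (intro power_strict_mono) auto
  then show "0 \<le> t" "t < 1" "x \<bullet> x < 1" "0 \<le> x \<bullet> x" "norm x < 1" "x \<bullet> x = (norm x)\<^sup>2"
    using n e by auto
qed

lemma inC1bar:
  fixes x :: "real^'n"
  assumes "(t, x) \<in> C1bar"
  shows "0 \<le> 1 - t" "0 \<le> 1 - x \<bullet> x"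
proof -
  have n: "t \<le> 1" "norm x \<le> 1" using assms by (auto simp: C1bar_def)
  have e: "x \<bullet> x = (norm x)\<^sup>2" by (simp add: power2_norm_eq_inner)
  have "(norm x)\<^sup>2 \<le> 1\<^sup>2" using n by (intro power_mono) auto
  then show "0 \<le> 1 - t" "0 \<le> 1 - x \<bullet> x" using n e by auto
qed

theorem lemma3p3:
  fixes \<kappa> \<delta> :: real
  assumes "1 < \<kappa>" "\<kappa> < 2" "0 < \<delta>" "\<delta> \<le> 1"
  shows "\<exists>(\<Phi> :: real \<Rightarrow> real^'n \<Rightarrow> real) \<Phi>t D\<Phi> D2\<Phi> (N::real).
     continuous_on (C1bar :: (real \<times> (real^'n)) set) (\<lambda>(t, x). \<Phi> t x) \<and>
     C12_derivs \<Phi> \<Phi>t D\<Phi> D2\<Phi> \<and>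
     (\<forall>(t, x)\<in>(C1 :: (real \<times> (real^'n)) set). \<forall>a\<in>Sdelta \<delta>.
        \<Phi>t t x + (\<Sum>i\<in>UNIV. \<Sum>j\<in>UNIV. a $ i $ j * D2\<Phi> t x $ i $ j)
          \<le> - ((min (1 - norm x) (sqrt (1 - t))) powr (\<kappa> - 2))) \<and>
     (\<forall>(t, x)\<in>(C1 :: (real \<times> (real^'n)) set). 0 \<le> \<Phi> t x \<and> \<Phi> t x \<le> N * (1 - norm x))"
proof -
  define c1 where "c1 = min \<delta> (2*\<delta>*\<kappa>*(\<kappa>-1))"
  define c2 where "c2 = min (min ((\<kappa>/2)*(1 - 2 powr (\<kappa>/2-1))) (2*\<delta>*\<kappa>*2 powr (\<kappa>/2-2))) \<delta>"
  define c0 where "c0 = min c1 c2"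
  have "(2::real) powr (\<kappa>/2-1) < 2 powr 0" by (rule powr_less_mono) (use assms in auto)
  then have "(2::real) powr (\<kappa>/2-1) < 1" by simp
  then have c0: "0 < c0" using assms by (simp add: c0_def c1_def c2_def)
  define K where "K = 2 / c0"
  have K: "0 < K" using c0 by (simp add: K_def)
  define \<Phi> :: "real \<Rightarrow> real^'n \<Rightarrow> real" where "\<Phi> = (\<lambda>t x. K * FF \<kappa> (\<kappa>+1) (1 - x \<bullet> x) (1 - t))"
  define \<Phi>t :: "real \<Rightarrow> real^'n \<Rightarrow> real" where "\<Phi>t = (\<lambda>t x. K * Ft \<kappa> (1 - x \<bullet> x) (1 - t))"
  define D\<Phi> :: "real \<Rightarrow> real^'n \<Rightarrow> real^'n" where
    "D\<Phi> = (\<lambda>t x. (K * (-2) * Fw \<kappa> (\<kappa>+1) (1 - x \<bullet> x) (1 - t)) *\<^sub>R x)"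
  define D2\<Phi> :: "real \<Rightarrow> real^'n \<Rightarrow> real^'n^'n" where
    "D2\<Phi> = (\<lambda>t x. Hmat (K * (-2) * Fw \<kappa> (\<kappa>+1) (1 - x \<bullet> x) (1 - t)) (K * 4 * Fww \<kappa> (1 - x \<bullet> x) (1 - t)) x)"
  define N where "N = K * 4 * (\<kappa>+1)"
  have fc: "continuous_on S (\<lambda>p::real \<times> (real^'n). 1 - snd p \<bullet> snd p)" for S
    by (intro continuous_intros)
  have gc: "continuous_on S (\<lambda>p::real \<times> (real^'n). 1 - fst p)" for S
    by (intro continuous_intros)
  have posC1: "\<forall>p\<in>(C1::(real \<times> (real^'n)) set). 0 < 1 - snd p \<bullet> snd p \<and> 0 < 1 - fst p"
    using inC1 by fastforce
  have P1: "continuous_on (C1bar :: (real \<times> (real^'n)) set) (\<lambda>(t, x). \<Phi> t x)"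
  proof -
    have "continuous_on (C1bar :: (real \<times> (real^'n)) set)
        (\<lambda>p. K * FF \<kappa> (\<kappa>+1) (1 - snd p \<bullet> snd p) (1 - fst p))"
      by (rule cont_FF[OF fc gc]) (use inC1bar assms in fastforce)+
    then show ?thesis unfolding \<Phi>_def split_def .
  qed
  have P2: "C12_derivs \<Phi> \<Phi>t D\<Phi> D2\<Phi>"
    unfolding C12_derivs_def
  proof (intro conjI)
    show "\<forall>(t, x)\<in>C1. ((\<lambda>s. \<Phi> s x) has_real_derivative \<Phi>t t x) (at t within {0..<1})"
    proof clarify
      fix t and x :: "real^'n"
      assume "(t, x) \<in> C1"
      note h = inC1[OF this]
      have "((\<lambda>t. FF \<kappa> (\<kappa>+1) (1 - x \<bullet> x) (1 - t)) has_real_derivative Ft \<kappa> (1 - x \<bullet> x) (1 - t)) (at (1 - (1 - t)))"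
        by (rule d_Ft) (use h in auto)
      then have "((\<lambda>t. FF \<kappa> (\<kappa>+1) (1 - x \<bullet> x) (1 - t)) has_real_derivative Ft \<kappa> (1 - x \<bullet> x) (1 - t)) (at t)"
        by simp
      from DERIV_cmult[OF this, of K]
      show "((\<lambda>s. \<Phi> s x) has_real_derivative \<Phi>t t x) (at t within {0..<1})"
        unfolding \<Phi>_def \<Phi>t_def by (rule has_field_derivative_at_within)
    qed
    show "\<forall>(t, x)\<in>C1. ((\<lambda>y. \<Phi> t y) has_derivative (\<lambda>h. D\<Phi> t x \<bullet> h)) (at x)"
    proof clarify
      fix t and x :: "real^'n"
      assume "(t, x) \<in> C1"
      note h = inC1[OF this]
      show "((\<lambda>y. \<Phi> t y) has_derivative (\<lambda>h. D\<Phi> t x \<bullet> h)) (at x)"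
        unfolding \<Phi>_def D\<Phi>_def by (rule dx1) (use h in auto)
    qed
    show "\<forall>(t, x)\<in>C1. ((\<lambda>y. D\<Phi> t y) has_derivative (\<lambda>h. D2\<Phi> t x *v h)) (at x)"
    proof clarify
      fix t and x :: "real^'n"
      assume "(t, x) \<in> C1"
      note h = inC1[OF this]
      show "((\<lambda>y. D\<Phi> t y) has_derivative (\<lambda>h. D2\<Phi> t x *v h)) (at x)"
        unfolding D2\<Phi>_def D\<Phi>_def by (rule dx2) (use h in auto)
    qed
    show "continuous_on C1 (\<lambda>(t, x). \<Phi>t t x)"
      unfolding \<Phi>t_def split_def by (rule cont_Ft[OF fc gc posC1])
    have cw: "continuous_on C1 (\<lambda>p::real \<times> (real^'n). K * (-2) * Fw \<kappa> (\<kappa>+1) (1 - snd p \<bullet> snd p) (1 - fst p))"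
      by (rule cont_Fw[OF fc gc posC1])
    have cww: "continuous_on C1 (\<lambda>p::real \<times> (real^'n). K * 4 * Fww \<kappa> (1 - snd p \<bullet> snd p) (1 - fst p))"
      by (rule cont_Fww[OF fc gc posC1])
    show "continuous_on C1 (\<lambda>(t, x). D\<Phi> t x)"
      unfolding D\<Phi>_def split_def by (intro continuous_on_scaleR cw continuous_on_snd continuous_on_id)
    show "continuous_on C1 (\<lambda>(t, x). D2\<Phi> t x)"
      unfolding D2\<Phi>_def split_def Hmat_def
      by (intro continuous_on_vec_lambda continuous_on_add continuous_on_mult cw cww
          continuous_on_const continuous_on_component continuous_on_snd continuous_on_id)
  qed
  have P3: "\<forall>(t, x)\<in>(C1 :: (real \<times> (real^'n)) set). \<forall>a\<in>Sdelta \<delta>.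
        \<Phi>t t x + (\<Sum>i\<in>UNIV. \<Sum>j\<in>UNIV. a $ i $ j * D2\<Phi> t x $ i $ j)
          \<le> - ((min (1 - norm x) (sqrt (1 - t))) powr (\<kappa> - 2))"
  proof clarify
    fix t and x :: "real^'n" and a :: "real^'n^'n"
    assume tx: "(t, x) \<in> C1" and a: "a \<in> Sdelta \<delta>"
    note h = inC1[OF tx]
    define w where "w = 1 - x \<bullet> x"
    define s where "s = 1 - t"
    define T where "T = (\<Sum>i\<in>UNIV. a $ i $ i)"
    define X where "X = (\<Sum>i\<in>UNIV. \<Sum>j\<in>UNIV. a $ i $ j * (x $ i * x $ j))"
    have T: "T \<ge> \<delta>" unfolding T_def using Sdelta_trace[OF a] assms by auto
    have X: "X \<ge> \<delta> * (x \<bullet> x)" unfolding X_def using Sdelta_quad[OF a] .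
    have mi: "Ft \<kappa> w s + (-2*Fw \<kappa> (\<kappa>+1) w s)*T + 4*Fww \<kappa> w s * X
     \<le> - c1 * w powr (\<kappa>-2) - c2 * s powr (\<kappa>/2-1)"
      unfolding c1_def c2_def
      by (rule main_ineq[OF assms(1,2,3,4) h(4) h(3) w_def]) (use h T X in \<open>auto simp: s_def\<close>)
    have lhs: "\<Phi>t t x + (\<Sum>i\<in>UNIV. \<Sum>j\<in>UNIV. a $ i $ j * D2\<Phi> t x $ i $ j)
       = K * (Ft \<kappa> w s + (-2*Fw \<kappa> (\<kappa>+1) w s)*T + 4*Fww \<kappa> w s * X)"
      unfolding \<Phi>t_def D2\<Phi>_def op_Hmat w_def s_def T_def X_def by (simp add: algebra_simps)
    have Wt: "0 \<le> w powr (\<kappa>-2)" "0 \<le> s powr (\<kappa>/2-1)" by auto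
    have "- c1 * w powr (\<kappa>-2) - c2 * s powr (\<kappa>/2-1) \<le> - c0 * (w powr (\<kappa>-2) + s powr (\<kappa>/2-1))"
    proof -
      have "c0 * w powr (\<kappa>-2) \<le> c1 * w powr (\<kappa>-2)" using Wt by (intro mult_right_mono) (auto simp: c0_def)
      moreover have "c0 * s powr (\<kappa>/2-1) \<le> c2 * s powr (\<kappa>/2-1)" using Wt by (intro mult_right_mono) (auto simp: c0_def)
      ultimately show ?thesis by (simp add: algebra_simps)
    qed
    with mi have "K * (Ft \<kappa> w s + (-2*Fw \<kappa> (\<kappa>+1) w s)*T + 4*Fww \<kappa> w s * X)
        \<le> K * (- c0 * (w powr (\<kappa>-2) + s powr (\<kappa>/2-1)))"
      using K by (intro mult_left_mono) auto
    also have "\<dots> = - 2 * (w powr (\<kappa>-2) + s powr (\<kappa>/2-1))" using c0 by (simp add: K_def)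
    also have "\<dots> \<le> - ((min (1 - norm x) (sqrt (1 - t))) powr (\<kappa> - 2))"
    proof -
      have "(min (1 - norm x) (sqrt s)) powr (\<kappa>-2) \<le> 2 * ((1 - (norm x)\<^sup>2) powr (\<kappa>-2) + s powr (\<kappa>/2-1))"
        by (rule min_bound) (use assms h in \<open>auto simp: s_def\<close>)
      then show ?thesis using h by (simp add: w_def s_def)
    qed
    finally show "\<Phi>t t x + (\<Sum>i\<in>UNIV. \<Sum>j\<in>UNIV. a $ i $ j * D2\<Phi> t x $ i $ j)
          \<le> - ((min (1 - norm x) (sqrt (1 - t))) powr (\<kappa> - 2))" using lhs by simp
  qed
  have P4: "\<forall>(t, x)\<in>(C1 :: (real \<times> (real^'n)) set). 0 \<le> \<Phi> t x \<and> \<Phi> t x \<le> N * (1 - norm x)"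
  proof clarify
    fix t and x :: "real^'n"
    assume tx: "(t, x) \<in> C1"
    note h = inC1[OF tx]
    have w: "0 < 1 - x \<bullet> x" "1 - x \<bullet> x \<le> 1" using h by auto
    have b: "0 \<le> FF \<kappa> (\<kappa>+1) (1 - x \<bullet> x) (1 - t)" "FF \<kappa> (\<kappa>+1) (1 - x \<bullet> x) (1 - t) \<le> 2*(\<kappa>+1)*(1 - x \<bullet> x)"
      using FF_bounds[OF assms(1,2) w, of "1 - t"] h by auto
    have "1 - x \<bullet> x = (1 - norm x) * (1 + norm x)" using h by (simp add: algebra_simps power2_eq_square)
    also have "\<dots> \<le> (1 - norm x) * 2" using h by (intro mult_left_mono) auto
    finally have w2: "1 - x \<bullet> x \<le> 2 * (1 - norm x)" by simp
    have "\<Phi> t x \<le> K * (2*(\<kappa>+1)*(1 - x \<bullet> x))" unfolding \<Phi>_def using b K by (intro mult_left_mono) auto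
    also have "\<dots> \<le> K * (2*(\<kappa>+1)*(2 * (1 - norm x)))" using w2 K assms
      by (intro mult_left_mono) auto
    also have "\<dots> = N * (1 - norm x)" by (simp add: N_def algebra_simps)
    finally show "0 \<le> \<Phi> t x \<and> \<Phi> t x \<le> N * (1 - norm x)" using b K by (simp add: \<Phi>_def)
  qed
  show ?thesis using P1 P2 P3 P4 by blast
qed

end
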